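(* Let $n\ge1$ and $m\ge1$ be integers and $q\in\mathbb{C}$. With $K_n(x,q)=(1+x)^{2n}+qx^n$ and $f_m(x)=(x^{2m+1}-1)/(x-1)$, \[ \Delta_x\big(K_n(x,q)f_m(x)\big)=C_m^{(n)}\,q^{2n-1}(q+2^{2n})\prod_{k=1}^{m}\big(q+(2\cos k\theta_m+2)^n\big)^4 = C_m^{(n)}\,q^{2n-1}(q+2^{2n})\,H_m^{(n)}(q)^4, \] where $C_m^{(n)}=(-1)^m(2m+1)^{2m-1}n^{2n}$.
   Context: For a polynomial $P(x)$ of degree $d$ with leading coefficient $a_d$ and roots $x_1,\dots,x_d$ (with multiplicity), its discriminant is $\Delta_x P=a_d^{2d-2}\prod_{1\le i<j\le d}(x_i-x_j)^2$. For integers $m\ge0$, $n\ge1$, let $\theta_m=2\pi/(2m+1)$ and $H_m^{(n)}(q)=\prod_{k=1}^{m}\big(q+(2\cos k\theta_m+2)^n\big)$ (so $H_0^{(n)}=1$). *)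

theory Defs
  imports Complex_Main "HOL-Computational_Algebra.Polynomial" "HOL-Computational_Algebra.Fundamental_Theorem_Algebra"
begin

text \<open>The product is symmetric, so the choice of enumeration of the root multiset is irrelevant.\<close>
definition disc :: "complex poly \<Rightarrow> complex" where
  "disc p = (let xs = (SOME xs. mset xs = proots p) in
     lead_coeff p ^ (2 * degree p - 2) *
     (\<Prod>(i, j) \<in> {(i, j). i < j \<and> j < length xs}. (xs ! i - xs ! j) ^ 2))"

definition theta :: "nat \<Rightarrow> real" where
  "theta m = 2 * pi / (2 * real m + 1)"

definition H :: "nat \<Rightarrow> nat \<Rightarrow> complex \<Rightarrow> complex" where
  "H m n q = (\<Prod>k = 1..m. q + complex_of_real ((2 * cos (real k * theta m) + 2) ^ n))"

definition K :: "nat \<Rightarrow> complex \<Rightarrow> complex poly" where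
  "K n q = [:1, 1:] ^ (2 * n) + smult q (monom 1 n)"

definition f :: "nat \<Rightarrow> complex poly" where
  "f m = (monom 1 (2 * m + 1) - 1) div [:-1, 1:]"

definition C :: "nat \<Rightarrow> nat \<Rightarrow> complex" where
  "C m n = (-1) ^ m * of_nat (2 * m + 1) ^ (2 * m - 1) * of_nat n ^ (2 * n)"

end

theory Submission
  imports Defs
begin


definition Dl :: "complex list \<Rightarrow> complex" where
  "Dl xs = (\<Prod>(i, j) \<in> {(i, j). i < j \<and> j < length xs}. (xs ! i - xs ! j) ^ 2)"

lemma Dl_Cons: "Dl (x # xs) = (\<Prod>y\<in>#mset xs. (x - y)) ^ 2 * Dl xs"
proof -
  let ?n = "length xs"
  let ?S = "{(i, j). i < j \<and> j < ?n}"
  have eq: "{(i, j). i < j \<and> j < Suc ?n} =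
     (\<lambda>j. (0, Suc j)) ` {..<?n} \<union> (\<lambda>(i,j). (Suc i, Suc j)) ` ?S"
  proof (rule set_eqI, clarify)
    fix i j
    show "((i,j) \<in> {(i, j). i < j \<and> j < Suc ?n}) =
      ((i,j) \<in> (\<lambda>j. (0, Suc j)) ` {..<?n} \<union> (\<lambda>(i,j). (Suc i, Suc j)) ` ?S)"
      by (cases i; cases j) (auto simp: image_iff)
  qed
  have "Dl (x # xs) = (\<Prod>(i, j) \<in> (\<lambda>j. (0, Suc j)) ` {..<?n} \<union> (\<lambda>(i,j). (Suc i, Suc j)) ` ?S.
      ((x#xs) ! i - (x#xs) ! j) ^ 2)"
    unfolding Dl_def by (simp only: eq length_Cons)
  also have "\<dots> = (\<Prod>(i, j) \<in> (\<lambda>j. (0, Suc j)) ` {..<?n}. ((x#xs) ! i - (x#xs) ! j) ^ 2) *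
      (\<Prod>(i, j) \<in> (\<lambda>(i,j). (Suc i, Suc j)) ` ?S. ((x#xs) ! i - (x#xs) ! j) ^ 2)"
  proof (rule prod.union_disjoint)
    have "finite ?S" by (rule finite_subset[of _ "{..<?n} \<times> {..<?n}"]) auto
    thus "finite ((\<lambda>(i,j). (Suc i, Suc j)) ` ?S)" by simp
  qed auto
  also have "(\<Prod>(i, j) \<in> (\<lambda>j. (0, Suc j)) ` {..<?n}. ((x#xs) ! i - (x#xs) ! j) ^ 2)
      = (\<Prod>j<?n. (x - xs ! j) ^ 2)"
    by (subst prod.reindex) (auto simp: inj_on_def)
  also have "\<dots> = (\<Prod>j<?n. (x - xs ! j)) ^ 2"
    by (simp add: prod_power_distrib)
  also have "(\<Prod>j<?n. (x - xs ! j)) = (\<Prod>y\<in>#mset xs. (x - y))"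
  proof -
    have "(\<Prod>y\<in>#mset xs. (x - y)) = prod_mset (mset (map (\<lambda>y. x - y) xs))" by simp
    also have "\<dots> = prod_list (map (\<lambda>y. x - y) xs)" by (rule prod_mset_prod_list)
    also have "\<dots> = (\<Prod>j<?n. (x - xs ! j))" by (simp add: prod.list_conv_set_nth atLeast0LessThan)
    finally show ?thesis by simp
  qed
  also have "(\<Prod>(i, j) \<in> (\<lambda>(i,j). (Suc i, Suc j)) ` ?S. ((x#xs) ! i - (x#xs) ! j) ^ 2) = Dl xs"
  proof -
    have inj: "inj_on (\<lambda>(i,j). (Suc i, Suc j)) ?S" by (auto simp: inj_on_def)
    show ?thesis unfolding Dl_def prod.reindex[OF inj] by (simp add: o_def case_prod_beta)
  qed
  finally show ?thesis .
qed

lemma sign_step: "Suc l * l div 2 = l * (l - 1) div 2 + l"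
proof (cases l)
  case (Suc k)
  have "Suc l * l = l * (l - 1) + 2 * l" using Suc by (simp add: algebra_simps)
  thus ?thesis by simp
qed simp

lemma main_list:
  "(-1) ^ (length xs * (length xs - 1) div 2) * Dl xs =
   (\<Prod>x\<in>#mset xs. poly (pderiv (\<Prod>y\<in>#mset xs. [:-y, 1:])) x)"
proof (induction xs)
  case Nil
  then show ?case by (simp add: Dl_def)
next
  case (Cons x ys)
  define P where "P = (\<Prod>y\<in>#mset ys. [:-y, 1:])"
  define l where "l = length ys"
  define s where "s = l * (l - 1) div 2"
  define A where "A = (\<Prod>y\<in>#mset ys. (x - y))"
  have PA: "poly P x = A" unfolding P_def A_def by (simp add: poly_prod_mset image_mset.compositionality o_def)
  have P0: "poly P y = 0" if "y \<in># mset ys" for y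
    unfolding P_def poly_prod_mset using that by (auto simp: prod_mset_zero_iff image_iff)
  have d: "pderiv (\<Prod>y\<in>#mset (x#ys). [:-y, 1:]) = P + [:-x,1:] * pderiv P"
  proof -
    have e: "(\<Prod>y\<in>#mset (x#ys). [:-y, 1:]) = [:-x,1:] * P" by (simp add: P_def)
    have dl: "pderiv [:-x,1:] = 1" by (simp add: pderiv_pCons)
    show ?thesis unfolding e pderiv_mult dl by (simp only: mult_1_right add.commute)
  qed
  have "(\<Prod>y\<in>#mset ys. poly (P + [:-x,1:] * pderiv P) y) =
        (\<Prod>y\<in>#mset ys. (y - x) * poly (pderiv P) y)"
    by (intro arg_cong[where f=prod_mset] image_mset_cong) (simp add: P0 algebra_simps)
  also have "\<dots> = (\<Prod>y\<in>#mset ys. (y - x)) * (\<Prod>y\<in>#mset ys. poly (pderiv P) y)"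
    by (simp add: prod_mset.distrib)
  also have "(\<Prod>y\<in>#mset ys. (y - x)) = (\<Prod>y\<in>#mset ys. (-1) * (x - y))"
    by (intro arg_cong[where f=prod_mset] image_mset_cong) simp
  also have "\<dots> = (-1) ^ l * A"
    unfolding prod_mset.distrib by (simp add: A_def l_def)
  finally have e1: "(\<Prod>y\<in>#mset ys. poly (P + [:-x,1:] * pderiv P) y) = 
     (-1) ^ l * A * ((-1) ^ s * Dl ys)" using Cons.IH by (simp add: P_def s_def l_def)
  have "(\<Prod>z\<in>#mset (x#ys). poly (pderiv (\<Prod>y\<in>#mset (x#ys). [:-y, 1:])) z) =
     A * ((-1) ^ l * A * ((-1) ^ s * Dl ys))"
    unfolding d using e1 PA by simp
  also have "\<dots> = (-1) ^ (s + l) * Dl (x # ys)"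
    by (simp add: Dl_Cons A_def power_add power2_eq_square)
  finally have fin: "(\<Prod>z\<in>#mset (x#ys). poly (pderiv (\<Prod>y\<in>#mset (x#ys). [:-y, 1:])) z) = (-1) ^ (s + l) * Dl (x # ys)" .
  have sl: "length (x # ys) * (length (x # ys) - 1) div 2 = s + l"
    unfolding s_def l_def using sign_step[of "length ys"] by simp
  show ?case unfolding sl using fin by (rule sym)
qed

lemma disc_monic:
  assumes "lead_coeff p = 1"
  shows "disc p = (-1) ^ (degree p * (degree p - 1) div 2) * (\<Prod>x\<in>#proots p. poly (pderiv p) x)"
proof -
  define xs where "xs = (SOME xs. mset xs = proots p)"
  have xs: "mset xs = proots p" unfolding xs_def by (rule someI_ex) (rule ex_mset)
  have len: "length xs = degree p" using xs size_proots_complex[of p] by (metis size_mset)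
  have pp: "(\<Prod>y\<in>#proots p. [:-y, 1:]) = p"
    using complex_poly_decompose_multiset[of p] assms by simp
  have ml: "(-1) ^ (degree p * (degree p - 1) div 2) * Dl xs = (\<Prod>x\<in>#proots p. poly (pderiv p) x)"
    using main_list[of xs] unfolding len xs pp .
  have "disc p = Dl xs" unfolding disc_def Dl_def xs_def[symmetric] Let_def using assms by simp
  also have "\<dots> = (-1) ^ (degree p * (degree p - 1) div 2) * ((-1) ^ (degree p * (degree p - 1) div 2) * Dl xs)"
  proof -
    have "(-1::complex) ^ (degree p * (degree p - 1) div 2) * (-1) ^ (degree p * (degree p - 1) div 2) = ((-1) * (-1)) ^ (degree p * (degree p - 1) div 2)"
      by (rule power_mult_distrib[symmetric])
    thus ?thesis by (simp only: mult.assoc[symmetric]) simp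
  qed
  also have "\<dots> = (-1) ^ (degree p * (degree p - 1) div 2) * (\<Prod>x\<in>#proots p. poly (pderiv p) x)"
    using ml by simp
  finally show ?thesis .
qed



lemma prod_mset_pow: "(\<Prod>x\<in>#A. (g x :: complex) ^ k) = (\<Prod>x\<in>#A. g x) ^ k"
  by (induction A) (simp_all add: power_mult_distrib)

lemma prod_mset_const: "(\<Prod>x\<in>#A. (c :: complex)) = c ^ size A"
  by (induction A) simp_all

lemma poly_monic_roots:
  fixes p :: "complex poly"
  assumes "lead_coeff p = 1"
  shows "poly p c = (\<Prod>a\<in>#proots p. (c - a))"
proof -
  have pp: "(\<Prod>y\<in>#proots p. [:-y, 1:]) = p"
    using complex_poly_decompose_multiset[of p] assms by simp
  have "poly p c = poly (\<Prod>y\<in>#proots p. [:-y, 1:]) c" by (simp only: pp)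
  also have "\<dots> = (\<Prod>a\<in>#proots p. (c - a))"
    by (simp add: poly_prod_mset image_mset.compositionality o_def)
  finally show ?thesis .
qed

lemma prod_roots_shift:
  fixes p :: "complex poly"
  assumes "lead_coeff p = 1" "even (degree p)"
  shows "(\<Prod>a\<in>#proots p. (a - c)) = poly p c"
proof -
  have "(\<Prod>a\<in>#proots p. (a - c)) = (\<Prod>a\<in>#proots p. (-1) * (c - a))"
    by (intro arg_cong[where f=prod_mset] image_mset_cong) simp
  also have "\<dots> = (-1) ^ size (proots p) * (\<Prod>a\<in>#proots p. (c - a))"
    unfolding prod_mset.distrib prod_mset_const ..
  also have "\<dots> = poly p c"
    using assms by (simp add: size_proots_complex poly_monic_roots)
  finally show ?thesis .
qed

lemma prod_roots_id:
  fixes p :: "complex poly"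
  assumes "lead_coeff p = 1" "even (degree p)"
  shows "(\<Prod>a\<in>#proots p. a) = poly p 0"
  using prod_roots_shift[OF assms, of 0] by simp

lemma poly_K: "poly (K n q) x = (1 + x) ^ (2 * n) + q * x ^ n"
  by (simp add: K_def poly_monom)

lemma degree_K: assumes "n \<ge> 1" shows "degree (K n q) = 2 * n" and "lead_coeff (K n q) = 1"
proof -
  have d1: "degree ([:1, 1:] ^ (2 * n) :: complex poly) = 2 * n" by (simp add: degree_power_eq)
  have "degree (smult q (monom 1 n) :: complex poly) \<le> n"
    by (rule order_trans[OF degree_smult_le]) (simp add: degree_monom_le)
  hence d2: "degree (smult q (monom 1 n) :: complex poly) < 2 * n" using assms by linarith
  show dK: "degree (K n q) = 2 * n" unfolding K_def using d1 d2 by (simp add: degree_add_eq_left)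
  have l1: "coeff ([:1, 1:] ^ (2 * n) :: complex poly) (2 * n) = 1"
    using lead_coeff_power[of "[:1,1:] :: complex poly" "2 * n"] unfolding d1 by simp
  have l2: "coeff (smult q (monom 1 n) :: complex poly) (2 * n) = 0"
    using assms by (simp add: coeff_monom)
  have "coeff (K n q) (2 * n) = 1" unfolding K_def coeff_add l1 l2 by simp
  thus "lead_coeff (K n q) = 1" using dK by simp
qed

lemma poly_pderiv_K: assumes "n \<ge> 1"
  shows "poly (pderiv (K n q)) x = of_nat (2 * n) * (1 + x) ^ (2 * n - 1) + q * of_nat n * x ^ (n - 1)"
proof -
  have "pderiv (K n q) = smult (of_nat (2 * n)) ([:1,1:] ^ (2 * n - 1)) * pderiv [:1,1:] + smult q (monom (of_nat n) (n - 1))"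
    unfolding K_def pderiv_add pderiv_power pderiv_smult pderiv_monom by simp
  also have "pderiv [:1,1::complex:] = 1" by (simp add: pderiv_pCons)
  finally have e: "pderiv (K n q) = smult (of_nat (2 * n)) ([:1,1:] ^ (2 * n - 1)) + smult q (monom (of_nat n) (n - 1))" by simp
  show ?thesis unfolding e by (simp add: poly_monom add.commute)
qed

lemma K_root_ne0: assumes "n \<ge> 1" "poly (K n q) a = 0" shows "a \<noteq> 0"
  using assms by (auto simp: poly_K power_0_left)

lemma K_deriv_root: assumes "n \<ge> 1" "poly (K n q) a = 0"
  shows "a * poly (pderiv (K n q)) a = of_nat n * (1 + a) ^ (2 * n - 1) * (a - 1)"
proof -
  have r: "q * a ^ n = - ((1 + a) ^ (2 * n))" using assms(2) by (simp add: poly_K eq_neg_iff_add_eq_0 add.commute)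
  have an: "a * a ^ (n - 1) = a ^ n"
  proof -
    have e: "n = Suc (n - 1)" using assms(1) by simp
    have "a ^ Suc (n - 1) = a * a ^ (n - 1)" by (rule power_Suc)
    thus ?thesis using e by simp
  qed
  have bn: "(1 + a) ^ (2 * n) = (1 + a) * (1 + a) ^ (2 * n - 1)"
  proof -
    have e: "2 * n = Suc (2 * n - 1)" using assms(1) by simp
    have "(1 + a) ^ Suc (2 * n - 1) = (1 + a) * (1 + a) ^ (2 * n - 1)" by (rule power_Suc)
    thus ?thesis using e by simp
  qed
  have "a * poly (pderiv (K n q)) a = of_nat (2 * n) * a * (1 + a) ^ (2 * n - 1) + of_nat n * (q * (a * a ^ (n - 1)))"
    by (simp only: poly_pderiv_K[OF assms(1)] distrib_left mult_ac)
  also have "\<dots> = of_nat (2 * n) * a * (1 + a) ^ (2 * n - 1) - of_nat n * ((1 + a) * (1 + a) ^ (2 * n - 1))"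
    unfolding an r bn by simp
  also have "\<dots> = of_nat n * (1 + a) ^ (2 * n - 1) * (a - 1)" by (simp add: ring_distribs mult_ac)
  finally show ?thesis .
qed

lemma prod_K_deriv: assumes "n \<ge> 1"
  shows "(\<Prod>a\<in>#proots (K n q). poly (pderiv (K n q)) a) =
    of_nat n ^ (2 * n) * (q * (-1) ^ n) ^ (2 * n - 1) * (2 ^ (2 * n) + q)"
proof -
  note d = degree_K[OF assms, of q]
  have ev: "even (degree (K n q))" using d by simp
  have p0: "(\<Prod>a\<in>#proots (K n q). a) = 1"
    using prod_roots_id[OF d(2) ev] assms by (simp add: poly_K)
  have pm1: "(\<Prod>a\<in>#proots (K n q). (a - (-1))) = q * (-1) ^ n"
    using prod_roots_shift[OF d(2) ev, of "-1"] assms by (simp add: poly_K)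
  have p1: "(\<Prod>a\<in>#proots (K n q). (a - 1)) = 2 ^ (2 * n) + q"
    using prod_roots_shift[OF d(2) ev, of "1"] assms by (simp add: poly_K)
  have Kne: "K n q \<noteq> 0" using d by auto
  have "(\<Prod>a\<in>#proots (K n q). poly (pderiv (K n q)) a) =
     (\<Prod>a\<in>#proots (K n q). a) * (\<Prod>a\<in>#proots (K n q). poly (pderiv (K n q)) a)"
    using p0 by simp
  also have "\<dots> = (\<Prod>a\<in>#proots (K n q). a * poly (pderiv (K n q)) a)"
    by (simp only: prod_mset.distrib)
  also have "\<dots> = (\<Prod>a\<in>#proots (K n q). of_nat n * ((a - (-1)) ^ (2 * n - 1) * (a - 1)))"
    by (intro arg_cong[where f=prod_mset] image_mset_cong)
       (use Kne assms in \<open>simp add: K_deriv_root add.commute\<close>)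
  also have "\<dots> = of_nat n ^ size (proots (K n q)) *
      ((\<Prod>a\<in>#proots (K n q). (a - (-1))) ^ (2 * n - 1) * (\<Prod>a\<in>#proots (K n q). (a - 1)))"
    by (simp only: prod_mset.distrib prod_mset_pow prod_mset_const)
  also have "\<dots> = of_nat n ^ (2 * n) * (q * (-1) ^ n) ^ (2 * n - 1) * (2 ^ (2 * n) + q)"
    unfolding pm1 p1 size_proots_complex d by simp
  finally show ?thesis .
qed


lemma f_mult: "[:-1,1:] * f m = monom 1 (2*m+1) - 1"
proof -
  have "[:-1,1:] dvd (monom 1 (2*m+1) - 1 :: complex poly)"
    by (rule poly_eq_0_iff_dvd[THEN iffD1]) (simp add: poly_monom)
  thus ?thesis unfolding f_def by (rule dvd_mult_div_cancel)
qed

lemma f_props: shows "degree (f m) = 2 * m" and "lead_coeff (f m) = 1" and "f m \<noteq> 0"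
proof -
  have e: "(monom 1 (2*m+1) - 1 :: complex poly) = monom 1 (2*m+1) + (- 1)" by simp
  have dM: "degree (monom 1 (2*m+1) - 1 :: complex poly) = 2*m+1"
    unfolding e by (subst degree_add_eq_left) (simp_all add: degree_monom_eq)
  have cM: "coeff (monom 1 (2*m+1) - 1 :: complex poly) (2*m+1) = 1" by simp
  show fne: "f m \<noteq> 0" using f_mult[of m] dM by auto
  have "degree ([:-1,1:] * f m) = 1 + degree (f m)" using fne by (subst degree_mult_eq) auto
  thus "degree (f m) = 2 * m" using dM f_mult[of m] by simp
  have "lead_coeff (f m) = lead_coeff ([:-1,1:] * f m)" by (simp only: lead_coeff_mult) simp
  also have "\<dots> = lead_coeff (monom 1 (2*m+1) - 1 :: complex poly)" by (simp only: f_mult)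
  also have "\<dots> = 1" by (simp only: dM cM)
  finally show "lead_coeff (f m) = 1" .
qed

lemma poly_f_0: "poly (f m) 0 = 1"
  using arg_cong[OF f_mult[of m], of "\<lambda>p. poly p 0"] by (simp add: poly_monom)

lemma f_deriv_eq: "(x - 1) * poly (pderiv (f m)) x + poly (f m) x = of_nat (2*m+1) * x ^ (2*m)"
proof -
  have dl: "pderiv [:-1,1::complex:] = 1" by (simp add: pderiv_pCons)
  have e1: "pderiv ([:-1,1:] * f m) = [:-1,1:] * pderiv (f m) + f m"
    unfolding pderiv_mult dl by (simp only: mult_1_right)
  have e2: "pderiv (monom 1 (2*m+1) - 1 :: complex poly) = monom (of_nat (2*m+1)) (2*m)"
    by (simp add: pderiv_diff pderiv_monom)
  have "[:-1,1:] * pderiv (f m) + f m = pderiv ([:-1,1:] * f m)" by (rule e1[symmetric])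
  also have "\<dots> = pderiv (monom 1 (2*m+1) - 1)" by (simp only: f_mult)
  also have "\<dots> = monom (of_nat (2*m+1)) (2*m)" by (rule e2)
  finally have "[:-1,1:] * pderiv (f m) + f m = monom (of_nat (2*m+1)) (2*m)" .
  from arg_cong[OF this, of "\<lambda>p. poly p x"] show ?thesis by (simp add: poly_monom algebra_simps)
qed

lemma poly_f_1: "poly (f m) 1 = of_nat (2*m+1)"
  using f_deriv_eq[of 1 m] by simp

lemma prod_f_deriv: assumes "m \<ge> 1"
  shows "(\<Prod>b\<in>#proots (f m). poly (pderiv (f m)) b) = of_nat (2*m+1) ^ (2*m - 1)"
proof -
  note d = f_props[of m]
  have ev: "even (degree (f m))" using d by simp
  have p0: "(\<Prod>a\<in>#proots (f m). a) = 1"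
    using prod_roots_id[OF d(2) ev] by (simp add: poly_f_0)
  have p1: "(\<Prod>a\<in>#proots (f m). (a - 1)) = of_nat (2*m+1)"
    using prod_roots_shift[OF d(2) ev, of "1"] by (simp add: poly_f_1)
  have "of_nat (2*m+1) * (\<Prod>b\<in>#proots (f m). poly (pderiv (f m)) b) =
      (\<Prod>a\<in>#proots (f m). (a - 1) * poly (pderiv (f m)) a)"
    unfolding prod_mset.distrib p1 ..
  also have "\<dots> = (\<Prod>a\<in>#proots (f m). of_nat (2*m+1) * a ^ (2*m))"
  proof (intro arg_cong[where f=prod_mset] image_mset_cong)
    fix a assume "a \<in># proots (f m)"
    hence "poly (f m) a = 0" using d(3) by simp
    thus "(a - 1) * poly (pderiv (f m)) a = of_nat (2*m+1) * a ^ (2*m)"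
      using f_deriv_eq[of a m] by simp
  qed
  also have "\<dots> = of_nat (2*m+1) ^ (2*m)"
    unfolding prod_mset.distrib prod_mset_pow prod_mset_const p0 size_proots_complex d(1) by simp
  also have "\<dots> = of_nat (2*m+1) * of_nat (2*m+1) ^ (2*m - 1)"
  proof -
    have e: "2 * m = Suc (2 * m - 1)" using assms by simp
    have "(of_nat (2*m+1) :: complex) ^ Suc (2 * m - 1) = of_nat (2*m+1) * of_nat (2*m+1) ^ (2 * m - 1)" by (rule power_Suc)
    thus ?thesis using e by simp
  qed
  finally have fin: "of_nat (2*m+1) * (\<Prod>b\<in>#proots (f m). poly (pderiv (f m)) b) =
     of_nat (2*m+1) * of_nat (2*m+1) ^ (2*m - 1)" .
  have nz: "(of_nat (2*m+1) :: complex) \<noteq> 0" by (simp only: of_nat_eq_0_iff)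
  show ?thesis using fin mult_left_cancel[OF nz] by blast
qed



definition zz :: "nat \<Rightarrow> nat \<Rightarrow> complex" where "zz m k = cis (real k * theta m)"

lemma theta_N: "real (2*m+1) * theta m = 2 * pi"
  unfolding theta_def by (simp add: field_simps)

lemma theta_pos: "theta m > 0" unfolding theta_def by simp

lemma cos_ne_1: assumes "0 < x" "x < 2 * pi" shows "cos x \<noteq> 1"
proof
  assume "cos x = 1"
  then obtain j :: int where j: "x = real_of_int j * 2 * pi" using cos_one_2pi_int by blast
  have "real_of_int j > 0" using assms(1) j by (simp add: zero_less_mult_iff)
  hence "j \<ge> 1" by simp
  hence "real_of_int j \<ge> 1" by simp
  hence "x \<ge> 2 * pi" using j by simp
  thus False using assms(2) by simp
qed

lemma kt_bounds: assumes "1 \<le> k" "k \<le> 2*m" shows "0 < real k * theta m" "real k * theta m < 2 * pi"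
proof -
  show "0 < real k * theta m" using assms theta_pos[of m] by simp
  have "real k * theta m < real (2*m+1) * theta m"
    using assms theta_pos[of m] by (intro mult_strict_right_mono) auto
  thus "real k * theta m < 2 * pi" using theta_N by simp
qed

lemma zz_root: assumes "1 \<le> k" "k \<le> 2*m" shows "poly (f m) (zz m k) = 0"
proof -
  have "zz m k ^ (2*m+1) = cis (real (2*m+1) * (real k * theta m))" unfolding zz_def DeMoivre ..
  also have "real (2*m+1) * (real k * theta m) = real k * (real (2*m+1) * theta m)" by (simp only: mult_ac)
  also have "\<dots> = 2 * pi * real k" unfolding theta_N by (simp only: mult_ac)
  also have "cis (2 * pi * real k) = 1" by (rule cis_multiple_2pi) simp
  finally have p: "zz m k ^ (2*m+1) = 1" .
  have ne: "zz m k \<noteq> 1"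
  proof
    assume "zz m k = 1"
    hence "Re (zz m k) = 1" by simp
    hence "cos (real k * theta m) = 1" by (simp add: zz_def)
    thus False using cos_ne_1 kt_bounds[OF assms] by blast
  qed
  have "poly ([:-1,1:] * f m) (zz m k) = zz m k ^ (2*m+1) - 1" unfolding f_mult by (simp add: poly_monom)
  moreover have "poly ([:-1,1:] * f m) (zz m k) = (zz m k - 1) * poly (f m) (zz m k)" by (simp add: algebra_simps)
  ultimately have "(zz m k - 1) * poly (f m) (zz m k) = 0" using p by simp
  thus ?thesis using ne by simp
qed

lemma zz_inj: "inj_on (zz m) {1..2*m}"
proof -
  have *: "zz m a \<noteq> zz m b" if "1 \<le> a" "a < b" "b \<le> 2*m" for a b
  proof
    assume e: "zz m a = zz m b"
    have "cis (real (b - a) * theta m) = zz m b / zz m a"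
      unfolding zz_def cis_divide using that by (simp add: of_nat_diff algebra_simps)
    also have "\<dots> = 1" using e by (simp add: zz_def)
    finally have "cos (real (b - a) * theta m) = 1"
      by (metis Re_complex_of_real cis.sel(1) one_complex.simps(1))
    moreover have "1 \<le> b - a" "b - a \<le> 2*m" using that by auto
    ultimately show False using cos_ne_1 kt_bounds by blast
  qed
  show ?thesis unfolding inj_on_def
    by (metis * atLeastAtMost_iff linorder_neqE_nat)
qed

lemma proots_f: "proots (f m) = mset_set (zz m ` {1..2*m})"
proof -
  define A where "A = mset_set (zz m ` {1..2*m})"
  define B where "B = proots (f m)"
  have fne: "f m \<noteq> 0" by (rule f_props)
  have sub: "A \<subseteq># B"
    unfolding subseteq_mset_def A_def B_def
  proof
    fix x
    show "count (mset_set (zz m ` {1..2*m})) x \<le> count (proots (f m)) x"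
    proof (cases "x \<in> zz m ` {1..2*m}")
      case True
      then obtain k where k: "1 \<le> k" "k \<le> 2*m" "x = zz m k" by auto
      have "poly (f m) x = 0" using zz_root[OF k(1,2)] k(3) by simp
      hence "order x (f m) \<noteq> 0" using fne order_root by blast
      thus ?thesis using True fne by simp
    qed simp
  qed
  have sA: "size A = 2 * m" unfolding A_def using zz_inj[of m] by (simp add: card_image)
  have sB: "size B = 2 * m" unfolding B_def size_proots_complex f_props(1) ..
  have "size (B - A) = 0" using size_Diff_submset[OF sub] sA sB by simp
  hence "B - A = {#}" by simp
  hence "B = A" using sub by (metis subset_mset.add_diff_inverse add_0_right)
  thus ?thesis unfolding A_def B_def .
qed

lemma prod_f_roots: "(\<Prod>b\<in>#proots (f m). g b) = (\<Prod>k=1..2*m. g (zz m k))"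
proof -
  have "(\<Prod>b\<in>#proots (f m). g b) = prod g (zz m ` {1..2*m})"
    unfolding proots_f prod_unfold_prod_mset ..
  also have "\<dots> = (\<Prod>k=1..2*m. g (zz m k))" using prod.reindex[OF zz_inj[of m]] by simp
  finally show ?thesis .
qed

lemma one_plus_cis_sq: "(1 + cis t) ^ 2 = cis t * complex_of_real (2 * cos t + 2)"
proof -
  have s: "(sin t)^2 = 1 - (cos t)^2" using sin_cos_squared_add[of t] by linarith
  show ?thesis
    by (simp add: complex_eq_iff power2_eq_square cis.ctr algebra_simps s[unfolded power2_eq_square])
qed

lemma poly_K_zz: "poly (K n q) (zz m k) = zz m k ^ n * (q + complex_of_real ((2 * cos (real k * theta m) + 2) ^ n))"
proof -
  have "(1 + zz m k) ^ (2 * n) = ((1 + zz m k) ^ 2) ^ n" by (simp add: power_mult)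
  also have "\<dots> = zz m k ^ n * complex_of_real ((2 * cos (real k * theta m) + 2) ^ n)"
    unfolding zz_def one_plus_cis_sq power_mult_distrib of_real_power ..
  finally show ?thesis by (simp add: poly_K algebra_simps)
qed

lemma prod_symm:
  fixes h :: "nat \<Rightarrow> complex"
  assumes "\<And>k. 1 \<le> k \<Longrightarrow> k \<le> m \<Longrightarrow> h (2*m+1-k) = h k"
  shows "(\<Prod>k=1..2*m. h k) = (\<Prod>k=1..m. h k) ^ 2"
proof -
  have "(\<Prod>k=1..m+m. h k) = (\<Prod>k=1..m. h k) * (\<Prod>k=m+1..m+m. h k)"
    by (rule prod.ub_add_nat) simp
  also have "(\<Prod>k=m+1..m+m. h k) = (\<Prod>k=1..m. h (2*m+1-k))"
    by (rule prod.reindex_bij_witness[of _ "\<lambda>k. 2*m+1-k" "\<lambda>k. 2*m+1-k"]) auto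
  also have "\<dots> = (\<Prod>k=1..m. h k)" using assms by (intro prod.cong) auto
  finally show ?thesis by (simp add: mult_2 power2_eq_square)
qed

lemma prod_K_f_roots: assumes "m \<ge> 1"
  shows "(\<Prod>b\<in>#proots (f m). poly (K n q) b) = H m n q ^ 2"
proof -
  define h where "h k = q + complex_of_real ((2 * cos (real k * theta m) + 2) ^ n)" for k
  have z1: "(\<Prod>k=1..2*m. zz m k) = 1"
  proof -
    have "(\<Prod>k=1..2*m. zz m k) = (\<Prod>b\<in>#proots (f m). b)" using prod_f_roots[of "\<lambda>b. b" m] by simp
    also have "\<dots> = 1" using prod_roots_id[OF f_props(2)] f_props(1) by (simp add: poly_f_0)
    finally show ?thesis .
  qed
  have "(\<Prod>b\<in>#proots (f m). poly (K n q) b) = (\<Prod>k=1..2*m. zz m k ^ n * h k)"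
    unfolding prod_f_roots poly_K_zz h_def ..
  also have "\<dots> = (\<Prod>k=1..2*m. zz m k) ^ n * (\<Prod>k=1..2*m. h k)"
    by (simp add: prod.distrib prod_power_distrib)
  also have "(\<Prod>k=1..2*m. h k) = (\<Prod>k=1..m. h k) ^ 2"
  proof (rule prod_symm)
    fix k assume k: "1 \<le> k" "k \<le> m"
    have "real (2*m+1-k) * theta m = 2 * pi - real k * theta m"
      using k theta_N[of m] by (simp add: of_nat_diff algebra_simps)
    thus "h (2*m+1-k) = h k" unfolding h_def by simp
  qed
  finally show ?thesis using z1 by (simp add: H_def h_def)
qed


lemma alg_final:
  fixes X y a q b h c :: complex
  shows "X * (a * (q * y) ^ k * b * h ^ 2) * (h ^ 2 * c) = (X * y ^ k) * c * a * q ^ k * b * h ^ 4"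
proof -
  have "h ^ 4 = h ^ 2 * h ^ 2" by (simp flip: power_add)
  thus ?thesis by (simp add: power_mult_distrib mult_ac)
qed

lemma sign_final:
  assumes "n \<ge> 1"
  shows "(-1::complex) ^ ((2*n+2*m) * (2*n+2*m-1) div 2) * ((-1) ^ n) ^ (2*n-1) = (-1) ^ m"
proof -
  define a where "a = n + m"
  have a1: "a \<ge> 1" using assms a_def by simp
  have s: "(2*n+2*m) * (2*n+2*m-1) div 2 = a * (2*a-1)" unfolding a_def by (simp add: algebra_simps)
  have o1: "odd (2*a - 1)" using a1 by presburger
  have o2: "odd (2*n - 1)" using assms by presburger
  have par: "even (a * (2*a-1) + n * (2*n-1)) = even m"
    using o1 o2 unfolding a_def by (auto simp: even_mult_iff)
  have "(-1::complex) ^ ((2*n+2*m) * (2*n+2*m-1) div 2) * ((-1) ^ n) ^ (2*n-1) =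
        (-1) ^ (a * (2*a-1) + n * (2*n-1))"
    unfolding s power_add power_mult ..
  also have "\<dots> = (-1) ^ m" unfolding minus_one_power_iff par ..
  finally show ?thesis .
qed

lemma swap_lemma: assumes "n \<ge> 1"
  shows "(\<Prod>a\<in>#proots (K n q). poly (f m) a) = (\<Prod>b\<in>#proots (f m). poly (K n q) b)"
proof -
  note dK = degree_K[OF assms, of q]
  have "(\<Prod>a\<in>#proots (K n q). poly (f m) a) = (\<Prod>a\<in>#proots (K n q). \<Prod>b\<in>#proots (f m). (a - b))"
    by (intro arg_cong[where f=prod_mset] image_mset_cong) (rule poly_monic_roots[OF f_props(2)])
  also have "\<dots> = (\<Prod>b\<in>#proots (f m). \<Prod>a\<in>#proots (K n q). (a - b))"
    by (rule prod_mset.swap)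
  also have "\<dots> = (\<Prod>b\<in>#proots (f m). poly (K n q) b)"
    by (intro arg_cong[where f=prod_mset] image_mset_cong) (rule prod_roots_shift[OF dK(2)], simp add: dK(1))
  finally show ?thesis .
qed

theorem proposition2p3:
  fixes n m :: nat and q :: complex
  assumes "n \<ge> 1" and "m \<ge> 1"
  shows "disc (K n q * f m) =
           C m n * q ^ (2 * n - 1) * (q + 2 ^ (2 * n)) *
             (\<Prod>k = 1..m. q + complex_of_real ((2 * cos (real k * theta m) + 2) ^ n)) ^ 4
         \<and> disc (K n q * f m) = C m n * q ^ (2 * n - 1) * (q + 2 ^ (2 * n)) * H m n q ^ 4"
proof -
  note dK = degree_K[OF assms(1), of q]
  note df = f_props[of m]
  have Kne: "K n q \<noteq> 0" using dK by auto
  define P where "P = K n q * f m"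
  have lP: "lead_coeff P = 1" unfolding P_def lead_coeff_mult dK(2) df(2) by simp
  have dP: "degree P = 2*n + 2*m" unfolding P_def using Kne df by (simp add: degree_mult_eq dK(1))
  have rP: "proots P = proots (K n q) + proots (f m)" unfolding P_def using Kne df(3) by (rule proots_mult)
  have pd: "poly (pderiv P) x = poly (K n q) x * poly (pderiv (f m)) x + poly (f m) x * poly (pderiv (K n q)) x" for x
    unfolding P_def pderiv_mult by simp
  have partK: "(\<Prod>a\<in>#proots (K n q). poly (pderiv P) a) =
      (\<Prod>a\<in>#proots (K n q). poly (pderiv (K n q)) a) * (\<Prod>a\<in>#proots (K n q). poly (f m) a)"
  proof -
    have "(\<Prod>a\<in>#proots (K n q). poly (pderiv P) a) = (\<Prod>a\<in>#proots (K n q). poly (pderiv (K n q)) a * poly (f m) a)"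
      by (intro arg_cong[where f=prod_mset] image_mset_cong) (use Kne in \<open>simp add: pd\<close>)
    thus ?thesis by (simp only: prod_mset.distrib)
  qed
  have partf: "(\<Prod>b\<in>#proots (f m). poly (pderiv P) b) =
      (\<Prod>b\<in>#proots (f m). poly (K n q) b) * (\<Prod>b\<in>#proots (f m). poly (pderiv (f m)) b)"
  proof -
    have "(\<Prod>b\<in>#proots (f m). poly (pderiv P) b) = (\<Prod>b\<in>#proots (f m). poly (K n q) b * poly (pderiv (f m)) b)"
      by (intro arg_cong[where f=prod_mset] image_mset_cong) (use df(3) in \<open>simp add: pd\<close>)
    thus ?thesis by (simp only: prod_mset.distrib)
  qed
  have "disc P = (-1) ^ ((2*n+2*m) * (2*n+2*m-1) div 2) *
        ((\<Prod>a\<in>#proots (K n q). poly (pderiv P) a) * (\<Prod>b\<in>#proots (f m). poly (pderiv P) b))"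
    unfolding disc_monic[OF lP] dP rP image_mset_union prod_mset.union ..
  also have "\<dots> = (-1) ^ ((2*n+2*m) * (2*n+2*m-1) div 2) *
      (of_nat n ^ (2 * n) * (q * (-1) ^ n) ^ (2 * n - 1) * (2 ^ (2 * n) + q) * H m n q ^ 2) *
      (H m n q ^ 2 * of_nat (2*m+1) ^ (2*m - 1))"
    unfolding partK partf swap_lemma[OF assms(1)] prod_K_f_roots[OF assms(2)]
      prod_K_deriv[OF assms(1)] prod_f_deriv[OF assms(2)] by (simp only: mult.assoc)
  also have "\<dots> = ((-1) ^ ((2*n+2*m) * (2*n+2*m-1) div 2) * ((-1) ^ n) ^ (2 * n - 1)) *
      of_nat (2*m+1) ^ (2*m - 1) * of_nat n ^ (2 * n) * q ^ (2 * n - 1) * (2 ^ (2 * n) + q) * H m n q ^ 4"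
    by (rule alg_final)
  also have "\<dots> = C m n * q ^ (2 * n - 1) * (q + 2 ^ (2 * n)) * H m n q ^ 4"
    unfolding sign_final[OF assms(1)] C_def by (simp add: add.commute mult_ac)
  finally have main: "disc (K n q * f m) = C m n * q ^ (2 * n - 1) * (q + 2 ^ (2 * n)) * H m n q ^ 4"
    unfolding P_def .
  thus ?thesis unfolding H_def by simp
qed


end
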